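(* Let $s\in\mathbb{N}$, let $m\ge s-1$ be an integer and put $n=9m$. For arbitrary $w_1,\dots,w_s\in\mathbb{C}$, the shift-invariant subspace $X=X(w_1,\dots,w_s)$ admits a reproducing filter $\varphi^X\in\mathbb{C}_n(\mathbb{Z})$ such that $$\|\mathcal{F}_n[\varphi^X]\|_p\le \frac{\mathsf{c}_\star (18s)^{1/p}}{\sqrt{2n+1}}\quad\text{for all } p\in[1,+\infty],\qquad \mathsf{c}_\star:=2.16\pi^2+6.$$ In particular, $\|\mathcal{F}_n[\varphi^X]\|_\infty\le \frac{\mathsf{c}_\star}{\sqrt{2n+1}}$, $\|\mathcal{F}_n[\varphi^X]\|_2\le\frac{3\mathsf{c}_\star\sqrt{2s}}{\sqrt{2n+1}}$, and $\|\mathcal{F}_n[\varphi^X]\|_1\le\frac{18\mathsf{c}_\star s}{\sqrt{2n+1}}$.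
   Context: $\mathbb{C}(\mathbb{Z})$ is the space of two-sided complex sequences $x=(x_t)_{t\in\mathbb{Z}}$; $\mathbb{C}_n(\mathbb{Z})$ is the subspace of sequences with $x_t=0$ for $|t|>n$. The lag operator $\Delta$ acts by $(\Delta x)_t=x_{t-1}$. For $w_1,\dots,w_s\in\mathbb{C}$, $X(w_1,\dots,w_s)$ is the set of all $x\in\mathbb{C}(\mathbb{Z})$ solving $\mathsf{f}(\Delta)x=0$ where $\mathsf{f}(z)=\prod_{k=1}^s(1-w_kz)$ (an $s$-dimensional shift-invariant subspace). Convolution: $(u*v)_t=\sum_{\tau\in\mathbb{Z}}u_\tau v_{t-\tau}$. A filter $\varphi\in\mathbb{C}(\mathbb{Z})$ is reproducing for $X$ if $\varphi*x=x$ for all $x\in X$. With $[n]_\pm=\{-n,\dots,n\}$ and $\chi_{k,n}=\exp(i2\pi k/(2n+1))$, the DFT $\mathcal{F}_n:\mathbb{C}(\mathbb{Z})\to\mathbb{C}^{2n+1}$ (entries indexed $k=0,\dots,2n$) is $(\mathcal{F}_n[u])_k=(2n+1)^{-1/2}\sum_{\tau\in[n]_\pm}\chi_{k,n}^{-\tau}u_\tau$; $\|\cdot\|_p$ is the usual $\ell_p$-norm on $\mathbb{C}^{2n+1}$. *)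

theory Defs
  imports "HOL-Analysis.Analysis" "HOL-Computational_Algebra.Polynomial"
begin

type_synonym cseq = "int \<Rightarrow> complex"

definition Cn :: "nat \<Rightarrow> cseq set" where
  "Cn n = {x. \<forall>t. \<bar>t\<bar> > int n \<longrightarrow> x t = 0}"

definition lag :: "cseq \<Rightarrow> cseq" where
  "lag x = (\<lambda>t. x (t - 1))"

definition poly_lag :: "complex poly \<Rightarrow> cseq \<Rightarrow> cseq" where
  "poly_lag f x = (\<lambda>t. \<Sum>j\<le>degree f. coeff f j * (lag ^^ j) x t)"

text \<open>f(z) = prod_{k=1}^s (1 - w_k z); the w_k are indexed by k < s.\<close>
definition fpoly :: "nat \<Rightarrow> (nat \<Rightarrow> complex) \<Rightarrow> complex poly" where
  "fpoly s w = (\<Prod>k<s. [:1, - w k:])"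

definition Xsp :: "nat \<Rightarrow> (nat \<Rightarrow> complex) \<Rightarrow> cseq set" where
  "Xsp s w = {x. poly_lag (fpoly s w) x = (\<lambda>_. 0)}"

definition conv :: "cseq \<Rightarrow> cseq \<Rightarrow> cseq" where
  "conv u v = (\<lambda>t. \<Sum>\<^sub>\<infinity>\<tau>\<in>(UNIV::int set). u \<tau> * v (t - \<tau>))"

definition reproducing :: "cseq \<Rightarrow> cseq set \<Rightarrow> bool" where
  "reproducing \<phi> X \<longleftrightarrow> (\<forall>x\<in>X. conv \<phi> x = x)"

definition chi :: "nat \<Rightarrow> nat \<Rightarrow> complex" where
  "chi k n = exp (\<i> * 2 * of_real pi * of_nat k / of_nat (2*n+1))"

text \<open>DFT, entries indexed k = 0..2n.\<close>
definition DFT :: "nat \<Rightarrow> cseq \<Rightarrow> nat \<Rightarrow> complex" where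
  "DFT n u k = (\<Sum>\<tau>\<in>{-int n..int n}. chi k n powi (- \<tau>) * u \<tau>) / of_real (sqrt (real (2*n+1)))"

definition pnorm :: "nat \<Rightarrow> real \<Rightarrow> (nat \<Rightarrow> complex) \<Rightarrow> real" where
  "pnorm n p v = (\<Sum>k\<le>2*n. cmod (v k) powr p) powr (1/p)"

definition supnorm :: "nat \<Rightarrow> (nat \<Rightarrow> complex) \<Rightarrow> real" where
  "supnorm n v = Max ((\<lambda>k. cmod (v k)) ` {..2*n})"

definition c_star :: real where
  "c_star = 2.16 * pi^2 + 6"

end

theory Submission
  imports Defs
begin

definition ip :: "nat \<Rightarrow> (nat \<Rightarrow> complex) \<Rightarrow> (nat \<Rightarrow> complex) \<Rightarrow> complex" where
  "ip n u v = (\<Sum>i\<le>n. u i * cnj (v i))"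

lemma ip_cong: "(\<And>i. i \<le> n \<Longrightarrow> u i = u' i) \<Longrightarrow> (\<And>i. i \<le> n \<Longrightarrow> v i = v' i) \<Longrightarrow> ip n u v = ip n u' v'"
  unfolding ip_def by (rule sum.cong) auto

lemma ip_swap: "ip n v u = cnj (ip n u v)"
  unfolding ip_def by (simp add: mult.commute)

lemma ip_sum_left: "finite A \<Longrightarrow> ip n (\<lambda>i. \<Sum>j\<in>A. c j * f j i) v = (\<Sum>j\<in>A. c j * ip n (f j) v)"
  unfolding ip_def by (simp add: sum_distrib_left sum_distrib_right mult.assoc sum.swap[of _ A])

lemma ip_sum_right: "finite A \<Longrightarrow> ip n u (\<lambda>i. \<Sum>j\<in>A. c j * f j i) = (\<Sum>j\<in>A. cnj (c j) * ip n u (f j))"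
  unfolding ip_def by (simp add: sum_distrib_left sum_distrib_right mult_ac sum.swap[of _ A])

lemma ip_diff_left: "ip n (\<lambda>i. u i - u' i) v = ip n u v - ip n u' v"
  unfolding ip_def by (simp add: algebra_simps sum_subtractf)

lemma ip_diff_right: "ip n u (\<lambda>i. v i - v' i) = ip n u v - ip n u v'"
  unfolding ip_def by (simp add: algebra_simps sum_subtractf)

lemma ip_scale_left: "ip n (\<lambda>i. u i * c) v = c * ip n u v"
  unfolding ip_def by (simp add: sum_distrib_left mult_ac)

lemma ip_scale_right: "ip n u (\<lambda>i. v i * c) = cnj c * ip n u v"
  unfolding ip_def by (simp add: sum_distrib_left mult_ac)

definition nsq :: "nat \<Rightarrow> (nat \<Rightarrow> complex) \<Rightarrow> real" where
  "nsq n u = (\<Sum>i\<le>n. (cmod (u i))\<^sup>2)"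

lemma ip_self: "ip n u u = of_real (nsq n u)"
  unfolding ip_def nsq_def of_real_sum by (intro sum.cong refl) (metis complex_norm_square)

lemma nsq_nonneg: "nsq n u \<ge> 0"
  unfolding nsq_def by (simp add: sum_nonneg)

lemma nsq_zero: "nsq n u = 0 \<Longrightarrow> i \<le> n \<Longrightarrow> u i = 0"
  unfolding nsq_def by (subst (asm) sum_nonneg_eq_0_iff) auto

definition orthonormal_fam :: "nat \<Rightarrow> nat \<Rightarrow> (nat \<Rightarrow> nat \<Rightarrow> complex) \<Rightarrow> bool" where
  "orthonormal_fam n r b \<longleftrightarrow> (\<forall>j<r. \<forall>l<r. ip n (b j) (b l) = (if j = l then 1 else 0))"

lemma sum_delta_ip:
  assumes "orthonormal_fam n r b" "j < r"
  shows "(\<Sum>l<r. a l * ip n (b l) (b j)) = a j"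
proof -
  have "(\<Sum>l<r. a l * ip n (b l) (b j)) = (\<Sum>l<r. if l = j then a l else 0)"
    using assms by (intro sum.cong) (auto simp: orthonormal_fam_def)
  also have "\<dots> = a j" using assms(2) by simp
  finally show ?thesis .
qed

lemma GS:
  fixes g :: "nat \<Rightarrow> nat \<Rightarrow> complex"
  shows "\<exists>r\<le>d. \<exists>b. orthonormal_fam n r b \<and>
     (\<forall>l<d. \<forall>i\<le>n. g l i = (\<Sum>j<r. ip n (g l) (b j) * b j i))"
proof (induction d)
  case 0
  show ?case by (rule exI[of _ 0]) (auto simp: orthonormal_fam_def)
next
  case (Suc d)
  then obtain r b where rd: "r \<le> d" and ob: "orthonormal_fam n r b"
    and ex: "\<forall>l<d. \<forall>i\<le>n. g l i = (\<Sum>j<r. ip n (g l) (b j) * b j i)" by blast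
  define h where "h = (\<lambda>i. g d i - (\<Sum>j<r. ip n (g d) (b j) * b j i))"
  have hb: "ip n h (b j) = 0" if "j < r" for j
  proof -
    have "ip n h (b j) = ip n (g d) (b j) - (\<Sum>l<r. ip n (g d) (b l) * ip n (b l) (b j))"
      unfolding h_def by (simp add: ip_diff_left ip_sum_left)
    also have "\<dots> = 0" using sum_delta_ip[OF ob that] by simp
    finally show ?thesis .
  qed
  have gl_h: "ip n (g l) h = 0" if "l < d" for l
  proof -
    have "ip n h (g l) = ip n h (\<lambda>i. \<Sum>j<r. ip n (g l) (b j) * b j i)"
      using ex that by (intro ip_cong) auto
    also have "\<dots> = 0" by (simp add: ip_sum_right hb)
    finally show ?thesis by (subst ip_swap) simp
  qed
  have gd_h: "ip n (g d) h = ip n h h"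
  proof -
    have "ip n (g d) h = ip n (\<lambda>i. h i + (\<Sum>j<r. ip n (g d) (b j) * b j i)) h"
      unfolding h_def by (intro ip_cong) auto
    also have "\<dots> = ip n h h + ip n (\<lambda>i. (\<Sum>j<r. ip n (g d) (b j) * b j i)) h"
      by (simp only: ip_def distrib_right sum.distrib)
    also have "ip n (\<lambda>i. (\<Sum>j<r. ip n (g d) (b j) * b j i)) h = 0"
    proof -
      have "ip n (b j) h = 0" if "j<r" for j using hb[OF that] by (subst ip_swap) simp
      then show ?thesis by (subst ip_sum_left) auto
    qed
    finally show ?thesis by simp
  qed
  show ?case
  proof (cases "nsq n h = 0")
    case True
    have "\<forall>l<Suc d. \<forall>i\<le>n. g l i = (\<Sum>j<r. ip n (g l) (b j) * b j i)"
    proof (intro allI impI)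
      fix l i assume l: "l < Suc d" and i: "i \<le> n"
      show "g l i = (\<Sum>j<r. ip n (g l) (b j) * b j i)"
      proof (cases "l = d")
        case True
        with nsq_zero[OF \<open>nsq n h = 0\<close> i] show ?thesis unfolding h_def by simp
      next
        case False then show ?thesis using ex l i by simp
      qed
    qed
    then show ?thesis using rd ob by (intro exI[of _ r]) auto
  next
    case False
    define \<nu> where "\<nu> = sqrt (nsq n h)"
    have \<nu>pos: "\<nu> > 0" using False nsq_nonneg[of n h] unfolding \<nu>_def by simp
    define \<kappa> :: complex where "\<kappa> = of_real (1/\<nu>)"
    have cnk: "cnj \<kappa> = \<kappa>" unfolding \<kappa>_def by simp
    have kk: "\<kappa> * \<kappa> * ip n h h = 1" using \<nu>pos False nsq_nonneg[of n h]
      unfolding \<kappa>_def by (simp add: ip_self \<nu>_def field_simps flip: of_real_mult)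
    define b' where "b' = b(r := (\<lambda>i. h i * \<kappa>))"
    have hr: "ip n (b' r) (b j) = 0" if "j < r" for j
      using hb[OF that] by (simp add: b'_def ip_scale_left)
    have hrr: "ip n (b' r) (b' r) = 1"
    proof -
      have "ip n (b' r) (b' r) = \<kappa> * \<kappa> * ip n h h"
        by (simp add: b'_def ip_scale_left ip_scale_right cnk)
      also have "\<dots> = 1" by (rule kk)
      finally show ?thesis .
    qed
    have ob': "orthonormal_fam n (Suc r) b'"
      unfolding orthonormal_fam_def
    proof (intro allI impI)
      fix j l assume j: "j < Suc r" and l: "l < Suc r"
      show "ip n (b' j) (b' l) = (if j = l then 1 else 0)"
      proof (cases "j = r"; cases "l = r")
        assume "j = r" "l = r" then show ?thesis using hrr by simp
      next
        assume "j = r" "l \<noteq> r" then show ?thesis using hr[of l] l by (simp add: b'_def)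
      next
        assume "j \<noteq> r" "l = r" then show ?thesis using hr[of j] j
          by (subst ip_swap) (simp add: b'_def)
      next
        assume "j \<noteq> r" "l \<noteq> r" then show ?thesis using ob j l
          by (simp add: b'_def orthonormal_fam_def)
      qed
    qed
    have sumr: "(\<Sum>j<Suc r. ip n (g l) (b' j) * b' j i) =
        (\<Sum>j<r. ip n (g l) (b j) * b j i) + ip n (g l) (b' r) * b' r i" for l i
      by (simp add: b'_def)
    have "\<forall>l<Suc d. \<forall>i\<le>n. g l i = (\<Sum>j<Suc r. ip n (g l) (b' j) * b' j i)"
    proof (intro allI impI)
      fix l i assume l: "l < Suc d" and i: "i \<le> n"
      show "g l i = (\<Sum>j<Suc r. ip n (g l) (b' j) * b' j i)"
      proof (cases "l = d")
        case True
        have "ip n (g d) (b' r) = \<kappa> * ip n h h"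
          by (simp add: b'_def ip_scale_right gd_h cnk)
        then have "ip n (g d) (b' r) * b' r i = (\<kappa> * \<kappa> * ip n h h) * h i"
          by (simp add: b'_def mult_ac)
        then have "ip n (g d) (b' r) * b' r i = h i" using kk by simp
        then show ?thesis using True sumr unfolding h_def by simp
      next
        case False
        then have "l < d" using l by simp
        have "ip n (g l) (b' r) = 0"
          by (simp add: b'_def ip_scale_right gl_h[OF \<open>l < d\<close>])
        then show ?thesis using ex \<open>l < d\<close> i sumr by simp
      qed
    qed
    then show ?thesis using rd ob' by (intro exI[of _ "Suc r"]) auto
  qed
qed

lemma bessel:
  assumes ob: "orthonormal_fam n r b"
  shows "(\<Sum>j<r. (cmod (ip n e (b j)))\<^sup>2) \<le> nsq n e"
proof -
  define c where "c j = ip n e (b j)" for j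
  define P where "P i = (\<Sum>j<r. c j * b j i)" for i
  define S where "S = (\<Sum>j<r. (cmod (c j))\<^sup>2)"
  have cc: "cnj (c j) * c j = of_real ((cmod (c j))\<^sup>2)" for j
    by (metis complex_norm_square mult.commute)
  have eP: "ip n e P = of_real S"
    unfolding P_def S_def by (simp add: ip_sum_right c_def[symmetric] cc)
  have Pe: "ip n P e = of_real S"
    by (subst ip_swap) (simp add: eP)
  have PP: "ip n P P = of_real S"
  proof -
    have "ip n P P = (\<Sum>j<r. c j * ip n (b j) P)"
      unfolding P_def[abs_def] by (simp add: ip_sum_left)
    also have "\<dots> = (\<Sum>j<r. c j * cnj (c j))"
    proof (rule sum.cong[OF refl])
      fix j assume j: "j \<in> {..<r}"
      have "ip n (b j) P = cnj (ip n P (b j))" by (rule ip_swap)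
      also have "ip n P (b j) = (\<Sum>l<r. c l * ip n (b l) (b j))"
        unfolding P_def[abs_def] by (simp add: ip_sum_left)
      also have "\<dots> = c j" using sum_delta_ip[OF ob] j by simp
      finally show "c j * ip n (b j) P = c j * cnj (c j)" by simp
    qed
    also have "\<dots> = of_real S" unfolding S_def of_real_sum
      by (intro sum.cong refl) (metis complex_norm_square)
    finally show ?thesis .
  qed
  have "ip n (\<lambda>i. e i - P i) (\<lambda>i. e i - P i) = of_real (nsq n e - S)"
    by (simp add: ip_diff_left ip_diff_right eP Pe PP ip_self[of n e])
  then have "nsq n e - S = nsq n (\<lambda>i. e i - P i)"
    by (metis ip_self of_real_eq_iff)
  then have "nsq n e - S \<ge> 0" using nsq_nonneg by simp
  then show ?thesis unfolding S_def c_def by simp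
qed

lemma chi_pow: "chi k n = chi 1 n ^ k"
  unfolding chi_def by (simp flip: exp_of_nat_mult add: field_simps)

lemma chi_unit: "cnj (chi k n) * chi k n = 1"
  unfolding chi_def by (simp add: exp_cnj flip: exp_add)

lemma chi_unit_pow: "cnj (chi k n ^ i) * chi k n ^ i = 1"
  by (metis chi_unit complex_cnj_power power_mult_distrib power_one)

lemma chi_nz: "chi k n \<noteq> 0"
  unfolding chi_def by simp

lemma chi_powi: "chi k n powi (- (int i - int t)) = cnj (chi k n ^ i) * chi k n ^ t"
proof -
  have nz: "chi k n ^ i \<noteq> 0" using chi_nz by simp
  have "chi k n powi (- (int i - int t)) = chi k n powi (int t - int i)" by simp
  also have "\<dots> = chi k n ^ t / chi k n ^ i"
    using chi_nz by (simp add: power_int_diff)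
  also have "\<dots> = cnj (chi k n ^ i) * chi k n ^ t"
    using chi_unit_pow[of k n i] nz by (simp add: field_simps)
  finally show ?thesis .
qed

lemma root_ne1:
  assumes "0 < d" "d < 2*n+1"
  shows "chi 1 n ^ d \<noteq> 1"
proof
  assume "chi 1 n ^ d = 1"
  moreover have "chi 1 n ^ d = exp (of_nat d * (\<i> * 2 * of_real pi * of_nat 1 / of_nat (2*n+1)))"
    unfolding chi_def by (rule exp_of_nat_mult[symmetric])
  ultimately have "exp (of_nat d * (\<i> * 2 * of_real pi * 1 / of_nat (2*n+1))) = 1"
    by simp
  then obtain j :: int where "Im (of_nat d * (\<i> * 2 * of_real pi * 1 / of_nat (2*n+1))) = of_int (2*j) * pi"
    unfolding exp_eq_1 by blast
  then have "real d * 2 * pi / real (2*n+1) = real_of_int (2*j) * pi"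
    by simp
  then have "real d * (2*pi) = (real_of_int j * real (2*n+1)) * (2*pi)"
    by (simp add: field_simps)
  then have "real d = real_of_int j * real (2*n+1)"
    using pi_gt_zero by simp
  then have "int d = j * int (2*n+1)"
    by (metis of_int_eq_iff of_int_mult of_int_of_nat_eq)
  then show False using assms
    by (smt (verit, best) int_ops(1) mult_le_0_iff mult_less_cancel_right2 of_nat_less_iff zero_less_imp_eq_int)
qed

lemma geo_zero:
  fixes q :: complex
  assumes "q \<noteq> 1" "q ^ N = 1"
  shows "(\<Sum>k<N. q ^ k) = 0"
  using assms by (simp add: geometric_sum)

lemma chi1_N: "chi 1 n ^ (2*n+1) = 1"
proof -
  have nz: "(of_nat (2*n+1) :: complex) \<noteq> 0" by (metis of_nat_eq_0_iff Suc_eq_plus1 nat.distinct(1))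
  have "chi 1 n ^ (2*n+1) = exp (of_nat (2*n+1) * (\<i> * 2 * of_real pi * of_nat 1 / of_nat (2*n+1)))"
    unfolding chi_def by (rule exp_of_nat_mult[symmetric])
  also have "of_nat (2*n+1) * (\<i> * 2 * of_real pi * of_nat 1 / of_nat (2*n+1)) = \<i> * 2 * of_real pi * of_nat 1"
    using nz by (simp only: times_divide_eq_right nonzero_mult_div_cancel_left[OF nz])
  also have "exp (\<i> * 2 * of_real pi * of_nat 1) = 1" using exp_two_pi_i by (simp add: mult_ac)
  finally show ?thesis by simp
qed

lemma orth_roots:
  assumes "i \<le> n" "t \<le> n"
  shows "(\<Sum>k\<le>2*n. cnj (chi k n ^ i) * chi k n ^ t) = (if i = t then of_nat (2*n+1) else 0)"
proof -
  define \<omega> where "\<omega> = chi 1 n"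
  define q where "q = cnj (\<omega> ^ i) * \<omega> ^ t"
  have trm: "cnj (chi k n ^ i) * chi k n ^ t = q ^ k" for k
    unfolding q_def \<omega>_def chi_pow[of k n]
    by (simp add: power_mult_distrib power_mult[symmetric] mult.commute flip: complex_cnj_power)
  have sumeq: "(\<Sum>k\<le>2*n. cnj (chi k n ^ i) * chi k n ^ t) = (\<Sum>k<2*n+1. q ^ k)"
    unfolding trm by (intro sum.cong) auto
  have wu: "cnj (\<omega> ^ a) * \<omega> ^ a = 1" for a unfolding \<omega>_def by (rule chi_unit_pow)
  show ?thesis
  proof (cases "i = t")
    case True
    then have "q = 1" unfolding q_def using wu by simp
    then show ?thesis using True sumeq by simp
  next
    case False
    have qN: "q ^ (2*n+1) = 1"
    proof -
      have "q ^ (2*n+1) = cnj (\<omega> ^ i) ^ (2*n+1) * (\<omega> ^ t) ^ (2*n+1)"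
        unfolding q_def by (rule power_mult_distrib)
      also have "\<dots> = cnj ((\<omega> ^ (2*n+1)) ^ i) * (\<omega> ^ (2*n+1)) ^ t"
        by (simp only: complex_cnj_power power_mult[symmetric] mult.commute)
      also have "\<dots> = 1" using chi1_N[of n] unfolding \<omega>_def by simp
      finally show ?thesis .
    qed
    have q1: "q \<noteq> 1"
    proof (cases "i < t")
      case True
      have "q = cnj (\<omega> ^ i) * \<omega> ^ i * \<omega> ^ (t - i)"
        unfolding q_def using True by (simp add: mult.assoc flip: power_add)
      also have "\<dots> = \<omega> ^ (t - i)" using wu by simp
      finally show ?thesis using root_ne1[of "t - i" n] True assms unfolding \<omega>_def by simp
    next
      case False
      with \<open>i \<noteq> t\<close> have "t < i" by simp
      have "q = cnj (\<omega> ^ (i - t)) * (cnj (\<omega> ^ t) * \<omega> ^ t)"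
        unfolding q_def using \<open>t < i\<close> by (simp add: mult_ac flip: power_add)
      also have "\<dots> = cnj (\<omega> ^ (i - t))" using wu by simp
      finally have "q = cnj (\<omega> ^ (i - t))" .
      moreover have "\<omega> ^ (i - t) \<noteq> 1" using root_ne1[of "i - t" n] \<open>t < i\<close> assms
        unfolding \<omega>_def by simp
      ultimately show ?thesis by (metis complex_cnj_one complex_cnj_cnj)
    qed
    show ?thesis using geo_zero[OF q1 qN] sumeq False by simp
  qed
qed

function R :: "(nat \<Rightarrow> complex) \<Rightarrow> nat \<Rightarrow> (nat \<Rightarrow> complex) \<Rightarrow> nat \<Rightarrow> complex" where
  "R c D a u = (if u < D then a u else - (\<Sum>j\<in>{1..D}. c j * R c D a (u - j)))"
  by auto
termination by (relation "Wellfounded.measure (\<lambda>(c,D,a,u). u)") auto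

declare R.simps[simp del]

lemma R_eq:
  assumes "\<And>u. u \<ge> D \<Longrightarrow> z u = - (\<Sum>j\<in>{1..D}. c j * z (u - j))"
  shows "z u = R c D z u"
proof (induction u rule: less_induct)
  case (less u)
  show ?case
  proof (cases "u < D")
    case True then show ?thesis by (simp add: R.simps)
  next
    case False
    have "z u = - (\<Sum>j\<in>{1..D}. c j * z (u - j))" using assms False by simp
    also have "\<dots> = - (\<Sum>j\<in>{1..D}. c j * R c D z (u - j))"
      using False less by (intro arg_cong[where f=uminus] sum.cong refl) auto
    also have "\<dots> = R c D z u" using False by (subst (2) R.simps) simp
    finally show ?thesis .
  qed
qed

lemma R_lin: "R c D a u = (\<Sum>l<D. a l * R c D (\<lambda>v. if v = l then 1 else 0) u)"
proof (induction u rule: less_induct)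
  case (less u)
  show ?case
  proof (cases "u < D")
    case True
    have "(\<Sum>l<D. a l * R c D (\<lambda>v. if v = l then 1 else 0) u) = (\<Sum>l<D. if l = u then a l else 0)"
      using True by (intro sum.cong refl) (auto simp: R.simps)
    then show ?thesis using True by (simp add: R.simps)
  next
    case False
    have "R c D a u = - (\<Sum>j\<in>{1..D}. c j * R c D a (u - j))" using False by (simp add: R.simps)
    also have "\<dots> = - (\<Sum>j\<in>{1..D}. c j * (\<Sum>l<D. a l * R c D (\<lambda>v. if v = l then 1 else 0) (u - j)))"
      using False less by (intro arg_cong[where f=uminus] sum.cong refl) auto
    also have "\<dots> = (\<Sum>l<D. a l * (- (\<Sum>j\<in>{1..D}. c j * R c D (\<lambda>v. if v = l then 1 else 0) (u - j))))"
      by (simp add: sum_distrib_left sum_negf mult_ac) (rule sum.swap)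
    also have "\<dots> = (\<Sum>l<D. a l * R c D (\<lambda>v. if v = l then 1 else 0) u)"
      using False by (intro sum.cong refl) (simp add: R.simps[of c D _ u])
    finally show ?thesis .
  qed
qed

lemma lag_pow: "(lag ^^ j) x t = x (t - int j)"
  by (induction j arbitrary: t) (auto simp: lag_def algebra_simps)

lemma fpoly_coeff0: "coeff (fpoly s w) 0 = 1"
proof -
  have "coeff (fpoly s w) 0 = poly (fpoly s w) 0" by (simp add: poly_0_coeff_0)
  also have "\<dots> = 1" unfolding fpoly_def by (simp add: poly_prod)
  finally show ?thesis .
qed

lemma fpoly_degree: "degree (fpoly s w) \<le> s"
proof -
  have "degree (fpoly s w) \<le> (\<Sum>k<s. degree [:1, - w k:])"
    unfolding fpoly_def using degree_prod_sum_le[of "{..<s}" "\<lambda>k. [:1, - w k:]"] by (simp add: o_def)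
  also have "\<dots> \<le> (\<Sum>k<s. 1)" by (intro sum_mono) simp
  finally show ?thesis by simp
qed

lemma X_rec:
  assumes "x \<in> Xsp s w"
  shows "x t = - (\<Sum>j\<in>{1..degree (fpoly s w)}. coeff (fpoly s w) j * x (t - int j))"
proof -
  define D where "D = degree (fpoly s w)"
  define c where "c = coeff (fpoly s w)"
  have "(\<Sum>j\<le>D. c j * x (t - int j)) = 0"
    using assms unfolding Xsp_def poly_lag_def D_def c_def
    by (simp add: lag_pow fun_eq_iff)
  moreover have "(\<Sum>j\<le>D. c j * x (t - int j)) = c 0 * x t + (\<Sum>j\<in>{1..D}. c j * x (t - int j))"
    by (simp add: atMost_atLeast0 sum.atLeast_Suc_atMost)
  ultimately show ?thesis using fpoly_coeff0 unfolding c_def D_def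
    by (simp add: eq_neg_iff_add_eq_0 add.commute)
qed

lemma window_span:
  assumes "x \<in> Xsp s w"
  defines "D \<equiv> degree (fpoly s w)" and "c \<equiv> coeff (fpoly s w)"
  shows "x (t0 + int i) = (\<Sum>l<D. x (t0 - int D + int l) * R c D (\<lambda>v. if v = l then 1 else 0) (D + i))"
proof -
  define z where "z u = x (t0 - int D + int u)" for u
  have rec: "z u = - (\<Sum>j\<in>{1..D}. c j * z (u - j))" if "u \<ge> D" for u
  proof -
    have "z u = - (\<Sum>j\<in>{1..D}. c j * x (t0 - int D + int u - int j))"
      unfolding z_def c_def D_def by (rule X_rec[OF assms(1)])
    also have "\<dots> = - (\<Sum>j\<in>{1..D}. c j * z (u - j))"
      using that unfolding z_def by (intro arg_cong[where f=uminus] sum.cong refl) (auto simp: of_nat_diff algebra_simps)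
    finally show ?thesis .
  qed
  have "x (t0 + int i) = z (D + i)" unfolding z_def by simp
  also have "\<dots> = R c D z (D + i)" by (rule R_eq[OF rec])
  also have "\<dots> = (\<Sum>l<D. z l * R c D (\<lambda>v. if v = l then 1 else 0) (D + i))" by (rule R_lin)
  finally show ?thesis unfolding z_def .
qed

lemma window_basis:
  obtains r b where "r \<le> s" "orthonormal_fam n r b"
    "\<And>x t0 i. x \<in> Xsp s w \<Longrightarrow> i \<le> n \<Longrightarrow>
        x (t0 + int i) = (\<Sum>j<r. ip n (\<lambda>u. x (t0 + int u)) (b j) * b j i)"
proof -
  define D where "D = degree (fpoly s w)"
  define c where "c = coeff (fpoly s w)"
  define g where "g l i = R c D (\<lambda>v. if v = l then 1 else 0) (D + i)" for l i
  obtain r b where rD: "r \<le> D" and ob: "orthonormal_fam n r b"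
    and ex: "\<forall>l<D. \<forall>i\<le>n. g l i = (\<Sum>j<r. ip n (g l) (b j) * b j i)"
    using GS[of D n g] by blast
  have "x (t0 + int i) = (\<Sum>j<r. ip n (\<lambda>u. x (t0 + int u)) (b j) * b j i)"
    if x: "x \<in> Xsp s w" and i: "i \<le> n" for x t0 i
  proof -
    define a where "a l = x (t0 - int D + int l)" for l
    have y: "x (t0 + int u) = (\<Sum>l<D. a l * g l u)" for u
      unfolding a_def g_def D_def c_def by (rule window_span[OF x])
    have ipy: "ip n (\<lambda>u. x (t0 + int u)) (b j) = (\<Sum>l<D. a l * ip n (g l) (b j))" for j
      unfolding y by (rule ip_sum_left) simp
    have "(\<Sum>j<r. ip n (\<lambda>u. x (t0 + int u)) (b j) * b j i) =
          (\<Sum>l<D. a l * (\<Sum>j<r. ip n (g l) (b j) * b j i))"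
      unfolding ipy by (simp add: sum_distrib_left sum_distrib_right mult_ac sum.swap[of _ "{..<r}"])
    also have "\<dots> = (\<Sum>l<D. a l * g l i)" using ex i by (intro sum.cong refl) auto
    finally show ?thesis using y by simp
  qed
  moreover have "r \<le> s" using rD fpoly_degree unfolding D_def by (meson order_trans)
  ultimately show ?thesis using that ob by blast
qed

definition phiF :: "nat \<Rightarrow> (nat \<Rightarrow> nat \<Rightarrow> complex) \<Rightarrow> int \<Rightarrow> complex" where
  "phiF n F \<sigma> = (\<Sum>i\<le>n. \<Sum>t\<le>n. if int i - int t = \<sigma> then F i t else 0)"

lemma phiF_Cn: "phiF n F \<in> Cn n"
  unfolding Cn_def phiF_def by (auto intro!: sum.neutral)

lemma phiF_sum:
  "(\<Sum>\<sigma>\<in>{-int n..int n}. G \<sigma> * phiF n F \<sigma>) = (\<Sum>i\<le>n. \<Sum>t\<le>n. G (int i - int t) * F i t)"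
proof -
  have "(\<Sum>\<sigma>\<in>{-int n..int n}. G \<sigma> * phiF n F \<sigma>) =
        (\<Sum>\<sigma>\<in>{-int n..int n}. \<Sum>i\<le>n. \<Sum>t\<le>n. if int i - int t = \<sigma> then G \<sigma> * F i t else 0)"
    unfolding phiF_def by (simp add: sum_distrib_left if_distrib cong: if_cong)
  also have "\<dots> = (\<Sum>i\<le>n. \<Sum>t\<le>n. \<Sum>\<sigma>\<in>{-int n..int n}. if int i - int t = \<sigma> then G \<sigma> * F i t else 0)"
    by (subst sum.swap) (simp add: sum.swap[of _ "{-int n..int n}"])
  also have "\<dots> = (\<Sum>i\<le>n. \<Sum>t\<le>n. G (int i - int t) * F i t)"
    by (intro sum.cong refl) auto
  finally show ?thesis .
qed

lemma conv_phiF: "conv (phiF n F) x t = (\<Sum>i\<le>n. \<Sum>u\<le>n. x (t - (int i - int u)) * F i u)"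
proof -
  have "conv (phiF n F) x t = infsum (\<lambda>\<tau>. phiF n F \<tau> * x (t - \<tau>)) {-int n..int n}"
    unfolding conv_def
    by (rule infsum_cong_neutral) (use phiF_Cn[of n F] in \<open>auto simp: Cn_def\<close>)
  also have "\<dots> = (\<Sum>\<sigma>\<in>{-int n..int n}. (\<lambda>\<sigma>. x (t - \<sigma>)) \<sigma> * phiF n F \<sigma>)"
    by (simp add: mult.commute)
  also have "\<dots> = (\<Sum>i\<le>n. \<Sum>u\<le>n. x (t - (int i - int u)) * F i u)"
    by (rule phiF_sum)
  finally show ?thesis .
qed

lemma triple_swap:
  "(\<Sum>i\<in>A. \<Sum>u\<in>B. \<Sum>j\<in>C. f i u j) = (\<Sum>j\<in>C. \<Sum>i\<in>A. \<Sum>u\<in>B. f i u j)"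
proof -
  have "(\<Sum>i\<in>A. \<Sum>u\<in>B. \<Sum>j\<in>C. f i u j) = (\<Sum>i\<in>A. \<Sum>j\<in>C. \<Sum>u\<in>B. f i u j)"
    by (rule sum.cong[OF refl], rule sum.swap)
  also have "\<dots> = (\<Sum>j\<in>C. \<Sum>i\<in>A. \<Sum>u\<in>B. f i u j)" by (rule sum.swap)
  finally show ?thesis .
qed

lemma parseval_b:
  assumes "ip n b b = 1"
  shows "(\<Sum>k\<le>2*n. (cmod (ip n b (\<lambda>u. chi k n ^ u)))\<^sup>2) = real (2*n+1)"
proof -
  define E where "E k u = chi k n ^ u" for k u
  have "of_real (\<Sum>k\<le>2*n. (cmod (ip n b (E k)))\<^sup>2) = (\<Sum>k\<le>2*n. ip n b (E k) * cnj (ip n b (E k)))"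
    unfolding of_real_sum by (intro sum.cong refl) (metis complex_norm_square)
  also have "\<dots> = (\<Sum>k\<le>2*n. \<Sum>i\<le>n. \<Sum>u\<le>n. (b i * cnj (b u)) * (cnj (E k i) * E k u))"
    unfolding ip_def by (simp add: sum_product mult_ac)
  also have "\<dots> = (\<Sum>i\<le>n. \<Sum>u\<le>n. \<Sum>k\<le>2*n. (b i * cnj (b u)) * (cnj (E k i) * E k u))"
    by (subst triple_swap[symmetric]) (rule refl)
  also have "\<dots> = (\<Sum>i\<le>n. \<Sum>u\<le>n. (b i * cnj (b u)) * (if i = u then of_nat (2*n+1) else 0))"
  proof (intro sum.cong refl)
    fix i u assume iu: "i \<in> {..n}" "u \<in> {..n}"
    have "(\<Sum>k\<le>2*n. cnj (E k i) * E k u) = (if i = u then of_nat (2*n+1) else 0)"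
      unfolding E_def by (rule orth_roots) (use iu in auto)
    then show "(\<Sum>k\<le>2*n. (b i * cnj (b u)) * (cnj (E k i) * E k u)) =
        (b i * cnj (b u)) * (if i = u then of_nat (2*n+1) else 0)"
      by (simp only: sum_distrib_left[symmetric])
  qed
  also have "\<dots> = (\<Sum>i\<le>n. b i * cnj (b i) * of_nat (2*n+1))"
    by (intro sum.cong refl) (simp add: if_distrib cong: if_cong)
  also have "\<dots> = ip n b b * of_nat (2*n+1)" unfolding ip_def by (simp add: sum_distrib_right)
  finally have "of_real (\<Sum>k\<le>2*n. (cmod (ip n b (E k)))\<^sup>2) = (of_real (real (2*n+1)) :: complex)"
    using assms by simp
  then show ?thesis unfolding E_def of_real_eq_iff .
qed

lemma nsq_E: "nsq n (\<lambda>u. chi k n ^ u) = real (n+1)"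
proof -
  have "chi k n = exp (\<i> * of_real (2 * pi * real k / real (2*n+1)))"
    unfolding chi_def by (simp add: mult.assoc)
  then have "cmod (chi k n) = 1" by (simp only: norm_exp_i_times)
  then show ?thesis unfolding nsq_def by (simp add: norm_power)
qed

theorem proposition3:
  fixes s m n :: nat and w :: "nat \<Rightarrow> complex"
  assumes "s - 1 \<le> m" and "n = 9 * m"
  shows "\<exists>\<phi> \<in> Cn n. reproducing \<phi> (Xsp s w) \<and>
           (\<forall>p::real. 1 \<le> p \<longrightarrow>
              pnorm n p (DFT n \<phi>) \<le> c_star * (18 * real s) powr (1/p) / sqrt (real (2*n+1))) \<and>
           supnorm n (DFT n \<phi>) \<le> c_star / sqrt (real (2*n+1))"
proof -
  obtain r b where rs: "r \<le> s" and ob: "orthonormal_fam n r b"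
    and wb: "\<And>x t0 i. x \<in> Xsp s w \<Longrightarrow> i \<le> n \<Longrightarrow>
        x (t0 + int i) = (\<Sum>j<r. ip n (\<lambda>u. x (t0 + int u)) (b j) * b j i)"
    using window_basis[where s=s and n=n and w=w] by blast
  define F where "F i u = (\<Sum>j<r. b j i * cnj (b j u)) / of_nat (n+1)" for i u
  define \<phi> where "\<phi> = phiF n F"
  have Cn: "\<phi> \<in> Cn n" by (simp add: \<phi>_def phiF_Cn)
  have rep: "reproducing \<phi> (Xsp s w)"
    unfolding reproducing_def
  proof
    fix x assume x: "x \<in> Xsp s w"
    show "conv \<phi> x = x"
    proof
      fix t
      have row: "(\<Sum>u\<le>n. x (t - (int i - int u)) * F i u) = x t / of_nat (n+1)" if i: "i \<le> n" for i
      proof -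
        have "(\<Sum>u\<le>n. x (t - (int i - int u)) * F i u) =
              (\<Sum>u\<le>n. \<Sum>j<r. x ((t - int i) + int u) * cnj (b j u) * b j i / of_nat (n+1))"
          unfolding F_def by (intro sum.cong refl) (simp add: sum_distrib_left sum_divide_distrib mult_ac algebra_simps)
        also have "\<dots> = (\<Sum>j<r. \<Sum>u\<le>n. x ((t - int i) + int u) * cnj (b j u) * b j i / of_nat (n+1))"
          by (rule sum.swap)
        also have "\<dots> = (\<Sum>j<r. ip n (\<lambda>u. x ((t - int i) + int u)) (b j) * b j i) / of_nat (n+1)"
          unfolding ip_def by (simp add: sum_distrib_right sum_divide_distrib)
        also have "\<dots> = x ((t - int i) + int i) / of_nat (n+1)" using wb[OF x i, of "t - int i"] by simp
        finally show ?thesis by simp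
      qed
      have "conv \<phi> x t = (\<Sum>i\<le>n. \<Sum>u\<le>n. x (t - (int i - int u)) * F i u)"
        unfolding \<phi>_def by (rule conv_phiF)
      also have "\<dots> = (\<Sum>i\<le>n. x t / of_nat (n+1))" using row by simp
      also have "\<dots> = x t"
      proof -
        have "(of_nat (n+1) :: complex) \<noteq> 0" by (metis of_nat_eq_0_iff Suc_eq_plus1 nat.distinct(1))
        then show ?thesis by simp
      qed
      finally show "conv \<phi> x t = x t" .
    qed
  qed
  define E where "E k u = chi k n ^ u" for k u
  define dk where "dk k = (\<Sum>j<r. (cmod (ip n (b j) (E k)))\<^sup>2) / (real (n+1) * sqrt (real (2*n+1)))" for k
  have DFTeq: "DFT n \<phi> k = of_real (dk k)" for k
  proof -
    have "(\<Sum>\<sigma>\<in>{-int n..int n}. chi k n powi (-\<sigma>) * \<phi> \<sigma>) =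
          (\<Sum>i\<le>n. \<Sum>u\<le>n. chi k n powi (- (int i - int u)) * F i u)"
      unfolding \<phi>_def by (rule phiF_sum)
    also have "\<dots> = (\<Sum>i\<le>n. \<Sum>u\<le>n. \<Sum>j<r. (b j i * cnj (E k i)) * cnj (b j u * cnj (E k u)) / of_nat (n+1))"
      unfolding F_def E_def chi_powi by (intro sum.cong refl) (simp add: sum_distrib_left sum_divide_distrib mult_ac)
    also have "\<dots> = (\<Sum>j<r. \<Sum>i\<le>n. \<Sum>u\<le>n. (b j i * cnj (E k i)) * cnj (b j u * cnj (E k u)) / of_nat (n+1))"
      by (rule triple_swap)
    also have "\<dots> = (\<Sum>j<r. ip n (b j) (E k) * cnj (ip n (b j) (E k))) / of_nat (n+1)"
      unfolding ip_def by (simp add: sum_product sum_divide_distrib)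
    also have "(\<Sum>j<r. ip n (b j) (E k) * cnj (ip n (b j) (E k))) = of_real (\<Sum>j<r. (cmod (ip n (b j) (E k)))\<^sup>2)"
      unfolding of_real_sum by (intro sum.cong refl) (metis complex_norm_square)
    finally have "(\<Sum>\<sigma>\<in>{-int n..int n}. chi k n powi (-\<sigma>) * \<phi> \<sigma>) =
        of_real (\<Sum>j<r. (cmod (ip n (b j) (E k)))\<^sup>2) / of_nat (n+1)" .
    then show ?thesis unfolding DFT_def dk_def by (simp add: divide_divide_eq_left)
  qed
  have dk_nn: "dk k \<ge> 0" for k unfolding dk_def by (intro divide_nonneg_nonneg sum_nonneg) auto
  have cm: "cmod (DFT n \<phi> k) = dk k" for k using dk_nn[of k] by (simp add: DFTeq)
  have sqN: "sqrt (real (2*n+1)) > 0" by simp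
  have dk_le: "dk k \<le> 1 / sqrt (real (2*n+1))" for k
  proof -
    have "(\<Sum>j<r. (cmod (ip n (b j) (E k)))\<^sup>2) = (\<Sum>j<r. (cmod (ip n (E k) (b j)))\<^sup>2)"
      by (intro sum.cong refl) (metis ip_swap complex_mod_cnj)
    also have "\<dots> \<le> nsq n (E k)" by (rule bessel[OF ob])
    also have "\<dots> = real (n+1)" unfolding E_def by (rule nsq_E)
    finally have "(\<Sum>j<r. (cmod (ip n (b j) (E k)))\<^sup>2) \<le> real (n+1)" .
    then have "dk k \<le> real (n+1) / (real (n+1) * sqrt (real (2*n+1)))"
      unfolding dk_def using sqN by (intro divide_right_mono) auto
    then show ?thesis by simp
  qed
  have dk_sum: "(\<Sum>k\<le>2*n. dk k) = real r * real (2*n+1) / (real (n+1) * sqrt (real (2*n+1)))"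
  proof -
    have "(\<Sum>k\<le>2*n. dk k) = (\<Sum>k\<le>2*n. \<Sum>j<r. (cmod (ip n (b j) (E k)))\<^sup>2) / (real (n+1) * sqrt (real (2*n+1)))"
      unfolding dk_def by (simp add: sum_divide_distrib)
    also have "(\<Sum>k\<le>2*n. \<Sum>j<r. (cmod (ip n (b j) (E k)))\<^sup>2) = (\<Sum>j<r. \<Sum>k\<le>2*n. (cmod (ip n (b j) (E k)))\<^sup>2)"
      by (rule sum.swap)
    also have "\<dots> = (\<Sum>j<r. real (2*n+1))"
    proof (intro sum.cong refl)
      fix j assume "j \<in> {..<r}"
      then have "ip n (b j) (b j) = 1" using ob unfolding orthonormal_fam_def by auto
      then show "(\<Sum>k\<le>2*n. (cmod (ip n (b j) (E k)))\<^sup>2) = real (2*n+1)"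
        unfolding E_def by (rule parseval_b)
    qed
    finally show ?thesis by simp
  qed
  have cs: "c_star \<ge> 1" unfolding c_star_def using pi_gt_zero by (simp add: add_increasing)
  define M where "M = 1 / sqrt (real (2*n+1))"
  have Mpos: "M > 0" unfolding M_def by simp
  have sup: "supnorm n (DFT n \<phi>) \<le> c_star / sqrt (real (2*n+1))"
  proof -
    have "supnorm n (DFT n \<phi>) \<le> M"
      unfolding supnorm_def M_def cm using dk_le by (subst Max_le_iff) auto
    also have "M \<le> c_star / sqrt (real (2*n+1))"
      unfolding M_def using cs sqN by (intro divide_right_mono) auto
    finally show ?thesis .
  qed
  have pn: "pnorm n p (DFT n \<phi>) \<le> c_star * (18 * real s) powr (1/p) / sqrt (real (2*n+1))"
    if p: "1 \<le> p" for p
  proof -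
    have each: "dk k powr p \<le> M powr (p - 1) * dk k" for k
    proof (cases "dk k = 0")
      case True then show ?thesis using p by simp
    next
      case False
      then have pos: "dk k > 0" using dk_nn[of k] by simp
      have "dk k powr p = dk k powr (p - 1) * dk k powr 1"
        using powr_add[of "dk k" "p - 1" 1] by simp
      also have "\<dots> = dk k powr (p - 1) * dk k" using pos by simp
      also have "\<dots> \<le> M powr (p - 1) * dk k"
        using pos p dk_le[of k] unfolding M_def
        by (intro mult_right_mono powr_mono2) auto
      finally show ?thesis .
    qed
    have "(\<Sum>k\<le>2*n. cmod (DFT n \<phi> k) powr p) \<le> (\<Sum>k\<le>2*n. M powr (p - 1) * dk k)"
      unfolding cm by (intro sum_mono each)
    also have "\<dots> = M powr (p - 1) * (real r * real (2*n+1) / (real (n+1) * sqrt (real (2*n+1))))"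
      by (simp add: sum_distrib_left[symmetric] dk_sum)
    also have "\<dots> = (M powr (p - 1) * M) * (real r * real (2*n+1) / real (n+1))"
      unfolding M_def by (simp add: field_simps)
    also have "M powr (p - 1) * M = M powr p"
      using Mpos powr_add[of M "p - 1" 1] by simp
    also have "real r * real (2*n+1) / real (n+1) \<le> 18 * real s"
    proof -
      have a: "real (2*n+1) \<le> 18 * real (n+1)" by simp
      have "real r \<le> real s" using rs by simp
      then have "real r * real (2*n+1) \<le> real s * (18 * real (n+1))"
        using a by (intro mult_mono) auto
      then have "real r * real (2*n+1) \<le> 18 * real s * real (n+1)" by (simp add: mult_ac)
      then show ?thesis by (simp add: divide_le_eq del: of_nat_Suc)
    qed
    then have "M powr p * (real r * real (2*n+1) / real (n+1)) \<le> M powr p * (18 * real s)"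
      by (intro mult_left_mono) auto
    finally have S: "(\<Sum>k\<le>2*n. cmod (DFT n \<phi> k) powr p) \<le> M powr p * (18 * real s)" .
    have "pnorm n p (DFT n \<phi>) \<le> (M powr p * (18 * real s)) powr (1/p)"
      unfolding pnorm_def using p S by (intro powr_mono2) (auto intro: sum_nonneg)
    also have "\<dots> = (M powr p) powr (1/p) * (18 * real s) powr (1/p)" by (rule powr_mult)
    also have "(M powr p) powr (1/p) = M" using p Mpos by (simp add: powr_powr)
    also have "M * (18 * real s) powr (1/p) \<le> c_star * (18 * real s) powr (1/p) / sqrt (real (2*n+1))"
    proof -
      have X: "(18 * real s) powr (1/p) \<ge> 0" by simp
      have "1 * (18 * real s) powr (1/p) \<le> c_star * (18 * real s) powr (1/p)"
        using cs X by (rule mult_right_mono)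
      then have "(18 * real s) powr (1/p) / sqrt (real (2*n+1)) \<le> c_star * (18 * real s) powr (1/p) / sqrt (real (2*n+1))"
        using sqN by (intro divide_right_mono) auto
      then show ?thesis unfolding M_def by simp
    qed
    finally show ?thesis .
  qed
  show ?thesis using Cn rep sup pn by blast
qed

end
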